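(* Let $f=f(x_1,\ldots,x_n)$ be a positive non-canalyzing Boolean function such that for every $i\in[n]$ both restrictions $f_{|x_i=0}$ and $f_{|x_i=1}$ are canalyzing. Then for each $i\in[n]$: (a) there is a maximal zero of $f$ having $0$'s in exactly two coordinates, one of which is $i$; (b) there is a minimal one of $f$ having $1$'s in exactly two coordinates, one of which is $i$.
   Context: $B=\{0,1\}$, $\preceq$ the coordinatewise order on $B^n$. $f$ is positive if $f(\mathbf{x})=1$ and $\mathbf{x}\preceq\mathbf{y}$ imply $f(\mathbf{y})=1$. Maximal zeros are $\preceq$-maximal false points, minimal ones are $\preceq$-minimal true points. $f_{|x_i=\alpha}$ is obtained by fixing $x_i=\alpha$. $f$ is canalyzing if for some $i$, $f_{|x_i=0}$ or $f_{|x_i=1}$ is constant. *)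

theory Defs
  imports Main
begin

text \<open>A Boolean function on the variable set V is modelled as f :: (nat \<Rightarrow> bool) \<Rightarrow> bool,
  evaluated only on points of B^V, i.e. assignments that are False outside V.\<close>

definition pts :: "nat set \<Rightarrow> (nat \<Rightarrow> bool) set" where
  "pts V = {x. \<forall>j. j \<notin> V \<longrightarrow> \<not> x j}"

definition leqB :: "(nat \<Rightarrow> bool) \<Rightarrow> (nat \<Rightarrow> bool) \<Rightarrow> bool" where
  "leqB x y = (\<forall>j. x j \<longrightarrow> y j)"

definition positive :: "nat set \<Rightarrow> ((nat \<Rightarrow> bool) \<Rightarrow> bool) \<Rightarrow> bool" where
  "positive V f = (\<forall>x\<in>pts V. \<forall>y\<in>pts V. f x \<and> leqB x y \<longrightarrow> f y)"

text \<open>Restriction f_{|x_i=a}: a function of the variables V - {i}.\<close>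
definition restr :: "((nat \<Rightarrow> bool) \<Rightarrow> bool) \<Rightarrow> nat \<Rightarrow> bool \<Rightarrow> (nat \<Rightarrow> bool) \<Rightarrow> bool" where
  "restr f i a = (\<lambda>x. f (x(i := a)))"

definition const_on :: "nat set \<Rightarrow> ((nat \<Rightarrow> bool) \<Rightarrow> bool) \<Rightarrow> bool" where
  "const_on V f = (\<exists>c. \<forall>x\<in>pts V. f x = c)"

definition canalyzing :: "nat set \<Rightarrow> ((nat \<Rightarrow> bool) \<Rightarrow> bool) \<Rightarrow> bool" where
  "canalyzing V f = (\<exists>i\<in>V. const_on (V - {i}) (restr f i False) \<or> const_on (V - {i}) (restr f i True))"

definition max_zero :: "nat set \<Rightarrow> ((nat \<Rightarrow> bool) \<Rightarrow> bool) \<Rightarrow> (nat \<Rightarrow> bool) \<Rightarrow> bool" where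
  "max_zero V f x = (x \<in> pts V \<and> \<not> f x \<and> (\<forall>y\<in>pts V. leqB x y \<and> y \<noteq> x \<longrightarrow> f y))"

definition min_one :: "nat set \<Rightarrow> ((nat \<Rightarrow> bool) \<Rightarrow> bool) \<Rightarrow> (nat \<Rightarrow> bool) \<Rightarrow> bool" where
  "min_one V f x = (x \<in> pts V \<and> f x \<and> (\<forall>y\<in>pts V. leqB y x \<and> y \<noteq> x \<longrightarrow> \<not> f y))"

end

theory Submission
  imports Defs
begin

lemma posD: "positive V f \<Longrightarrow> x \<in> pts V \<Longrightarrow> y \<in> pts V \<Longrightarrow> (\<And>j. x j \<Longrightarrow> y j) \<Longrightarrow> f x \<Longrightarrow> f y"
  unfolding positive_def leqB_def by blast

lemma L1:
  assumes pos: "positive V f" and iV: "i \<in> V" and nc: "\<not> const_on (V-{i}) (restr f i False)"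
  shows "f (\<lambda>j. j\<in>V \<and> j\<noteq>i)"
proof -
  obtain x where x: "x \<in> pts (V-{i})" "f (x(i:=False))"
    using nc unfolding const_on_def restr_def by (metis (full_types))
  show ?thesis
    by (rule posD[OF pos _ _ _ x(2)]) (use x(1) iV in \<open>auto simp: pts_def split: if_splits\<close>)
qed

lemma L2:
  assumes pos: "positive V f" and iV: "i \<in> V" and nc: "\<not> const_on (V-{i}) (restr f i True)"
  shows "\<not> f (\<lambda>j. j=i)"
proof
  assume f: "f (\<lambda>j. j=i)"
  have "f (x(i:=True))" if "x \<in> pts (V-{i})" for x
    by (rule posD[OF pos _ _ _ f]) (use that iV in \<open>auto simp: pts_def split: if_splits\<close>)
  then show False using nc unfolding const_on_def restr_def by blast
qed

lemma LA:
  assumes pos: "positive V f" and iV: "i \<in> V"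
    and nc: "\<forall>i\<in>V. \<not> const_on (V-{i}) (restr f i False) \<and> \<not> const_on (V-{i}) (restr f i True)"
    and can: "canalyzing (V-{i}) (restr f i False)"
  shows "\<exists>k\<in>V-{i}. \<not> f (\<lambda>j. j\<in>V \<and> j\<noteq>i \<and> j\<noteq>k)"
proof -
  obtain k bb c where k: "k \<in> V-{i}" and cc: "\<forall>x\<in>pts (V-{i}-{k}). f (x(k:=bb, i:=False)) = c"
    using can unfolding canalyzing_def const_on_def restr_def by auto
  have kV: "k \<in> V" using k by auto
  have "bb = False"
  proof (rule ccontr)
    assume "bb \<noteq> False"
    hence a: "bb = True" by simp
    have "(\<lambda>j. j\<in>V \<and> j\<noteq>i \<and> j\<noteq>k) \<in> pts (V-{i}-{k})" by (auto simp: pts_def)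
    with cc a have "c = f ((\<lambda>j. j\<in>V \<and> j\<noteq>i \<and> j\<noteq>k)(k:=True, i:=False))" by auto
    also have "(\<lambda>j. j\<in>V \<and> j\<noteq>i \<and> j\<noteq>k)(k:=True, i:=False) = (\<lambda>j. j\<in>V \<and> j\<noteq>i)"
      using k by (auto simp: fun_eq_iff)
    finally have c: "c = True" using L1[OF pos iV] nc iV by auto
    have "f (y(k:=True))" if y: "y \<in> pts (V-{k})" for y
    proof -
      have "y(i:=False) \<in> pts (V-{i}-{k})" using y by (auto simp: pts_def)
      with cc a c have fb: "f ((y(i:=False))(k:=True, i:=False))" by auto
      show ?thesis
        by (rule posD[OF pos _ _ _ fb]) (use y k in \<open>auto simp: pts_def split: if_splits\<close>)
    qed
    then have "const_on (V-{k}) (restr f k True)" unfolding const_on_def restr_def by blast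
    then show False using nc kV by auto
  qed
  have "c = False"
  proof (rule ccontr)
    assume "c \<noteq> False"
    have "(\<lambda>_. False) \<in> pts (V-{i}-{k})" by (auto simp: pts_def)
    with cc \<open>bb = False\<close> \<open>c \<noteq> False\<close> have fb: "f ((\<lambda>_. False)(k:=False, i:=False))" by auto
    have "f (\<lambda>j. j=i)"
      by (rule posD[OF pos _ _ _ fb]) (use iV in \<open>auto simp: pts_def split: if_splits\<close>)
    then show False using L2[OF pos iV] nc iV by auto
  qed
  have "(\<lambda>j. j\<in>V \<and> j\<noteq>i \<and> j\<noteq>k) \<in> pts (V-{i}-{k})" by (auto simp: pts_def)
  with cc \<open>bb = False\<close> \<open>c = False\<close> have "\<not> f ((\<lambda>j. j\<in>V \<and> j\<noteq>i \<and> j\<noteq>k)(k:=False, i:=False))" by auto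
  also have "(\<lambda>j. j\<in>V \<and> j\<noteq>i \<and> j\<noteq>k)(k:=False, i:=False) = (\<lambda>j. j\<in>V \<and> j\<noteq>i \<and> j\<noteq>k)"
    by (auto simp: fun_eq_iff)
  finally show ?thesis using k by blast
qed

lemma LB:
  assumes pos: "positive V f" and iV: "i \<in> V"
    and nc: "\<forall>i\<in>V. \<not> const_on (V-{i}) (restr f i False) \<and> \<not> const_on (V-{i}) (restr f i True)"
    and can: "canalyzing (V-{i}) (restr f i True)"
  shows "\<exists>k\<in>V-{i}. f (\<lambda>j. j=i \<or> j=k)"
proof -
  obtain k bb c where k: "k \<in> V-{i}" and cc: "\<forall>x\<in>pts (V-{i}-{k}). f (x(k:=bb, i:=True)) = c"
    using can unfolding canalyzing_def const_on_def restr_def by auto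
  have kV: "k \<in> V" using k by auto
  have "bb = True"
  proof (rule ccontr)
    assume "bb \<noteq> True"
    hence a: "bb = False" by simp
    have "(\<lambda>_. False) \<in> pts (V-{i}-{k})" by (auto simp: pts_def)
    with cc a have "c = f ((\<lambda>_. False)(k:=False, i:=True))" by auto
    also have "(\<lambda>_. False)(k:=False, i:=True) = (\<lambda>j. j=i)"
      using k by (auto simp: fun_eq_iff)
    finally have c: "c = False" using L2[OF pos iV] nc iV by auto
    have "\<not> f (y(k:=False))" if y: "y \<in> pts (V-{k})" for y
    proof
      assume fy: "f (y(k:=False))"
      have "y(i:=False) \<in> pts (V-{i}-{k})" using y by (auto simp: pts_def)
      with cc a c have nf: "\<not> f ((y(i:=False))(k:=False, i:=True))" by auto
      have "f ((y(i:=False))(k:=False, i:=True))"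
        by (rule posD[OF pos _ _ _ fy]) (use y k iV in \<open>auto simp: pts_def split: if_splits\<close>)
      with nf show False by simp
    qed
    then have "const_on (V-{k}) (restr f k False)" unfolding const_on_def restr_def by blast
    then show False using nc kV by auto
  qed
  have "c = True"
  proof (rule ccontr)
    assume "c \<noteq> True"
    have "(\<lambda>j. j\<in>V \<and> j\<noteq>i \<and> j\<noteq>k) \<in> pts (V-{i}-{k})" by (auto simp: pts_def)
    with cc \<open>bb = True\<close> \<open>c \<noteq> True\<close> have nf: "\<not> f ((\<lambda>j. j\<in>V \<and> j\<noteq>i \<and> j\<noteq>k)(k:=True, i:=True))" by auto
    have "f ((\<lambda>j. j\<in>V \<and> j\<noteq>i \<and> j\<noteq>k)(k:=True, i:=True))"
      by (rule posD[OF pos _ _ _ L1[OF pos iV]]) (use iV k nc in \<open>auto simp: pts_def split: if_splits\<close>)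
    with nf show False by simp
  qed
  have "(\<lambda>_. False) \<in> pts (V-{i}-{k})" by (auto simp: pts_def)
  with cc \<open>bb = True\<close> \<open>c = True\<close> have "f ((\<lambda>_. False)(k:=True, i:=True))" by auto
  also have "(\<lambda>_. False)(k:=True, i:=True) = (\<lambda>j. j=i \<or> j=k)"
    by (auto simp: fun_eq_iff)
  finally show ?thesis using k by blast
qed


theorem mainTheorem5:
  fixes n :: nat and f :: "(nat \<Rightarrow> bool) \<Rightarrow> bool"
  assumes "positive {0..<n} f"
    and "\<not> canalyzing {0..<n} f"
    and "\<forall>i<n. canalyzing ({0..<n} - {i}) (restr f i False)
                \<and> canalyzing ({0..<n} - {i}) (restr f i True)"
  shows "\<forall>i<n.
     (\<exists>x j. max_zero {0..<n} f x \<and> j < n \<and> j \<noteq> i \<and> {k. k < n \<and> \<not> x k} = {i, j})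
   \<and> (\<exists>x j. min_one {0..<n} f x \<and> j < n \<and> j \<noteq> i \<and> {k. k < n \<and> x k} = {i, j})"
proof (intro allI impI conjI)
  define V where "V = {0..<n}"
  fix i assume "i < n"
  hence iV: "i \<in> V" by (simp add: V_def)
  have pos: "positive V f" using assms(1) by (simp add: V_def)
  have nc: "\<forall>i\<in>V. \<not> const_on (V-{i}) (restr f i False) \<and> \<not> const_on (V-{i}) (restr f i True)"
    using assms(2) unfolding canalyzing_def V_def by blast
  have c0: "canalyzing (V-{i}) (restr f i False)" and c1: "canalyzing (V-{i}) (restr f i True)"
    using assms(3) \<open>i < n\<close> by (auto simp: V_def)
  obtain k where k: "k \<in> V-{i}" and nz: "\<not> f (\<lambda>j. j\<in>V \<and> j\<noteq>i \<and> j\<noteq>k)"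
    using LA[OF pos iV nc c0] by blast
  have kV: "k \<in> V" using k by simp
  have fi: "f (\<lambda>j. j\<in>V \<and> j\<noteq>i)" using L1[OF pos iV] nc iV by blast
  have fk: "f (\<lambda>j. j\<in>V \<and> j\<noteq>k)" using L1[OF pos kV] nc kV by blast
  have "max_zero V f (\<lambda>j. j\<in>V \<and> j\<noteq>i \<and> j\<noteq>k)"
    unfolding max_zero_def
  proof (intro conjI ballI impI)
    show "(\<lambda>j. j\<in>V \<and> j\<noteq>i \<and> j\<noteq>k) \<in> pts V" by (auto simp: pts_def)
    show "\<not> f (\<lambda>j. j\<in>V \<and> j\<noteq>i \<and> j\<noteq>k)" by (rule nz)
    fix y assume y: "y \<in> pts V" and h: "leqB (\<lambda>j. j\<in>V \<and> j\<noteq>i \<and> j\<noteq>k) y \<and> y \<noteq> (\<lambda>j. j\<in>V \<and> j\<noteq>i \<and> j\<noteq>k)"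
    have "y i \<or> y k"
    proof (rule ccontr)
      assume "\<not> (y i \<or> y k)"
      with y h have "y = (\<lambda>j. j\<in>V \<and> j\<noteq>i \<and> j\<noteq>k)" by (auto simp: fun_eq_iff leqB_def pts_def)
      with h show False by simp
    qed
    then show "f y"
    proof
      assume "y i" show "f y"
        by (rule posD[OF pos _ y _ fk]) (use h \<open>y i\<close> in \<open>auto simp: pts_def leqB_def\<close>)
    next
      assume "y k" show "f y"
        by (rule posD[OF pos _ y _ fi]) (use h \<open>y k\<close> in \<open>auto simp: pts_def leqB_def\<close>)
    qed
  qed
  moreover have "{j. j < n \<and> \<not> (j\<in>V \<and> j\<noteq>i \<and> j\<noteq>k)} = {i, k}"
    using k iV by (auto simp: V_def)
  ultimately show "\<exists>x j. max_zero {0..<n} f x \<and> j < n \<and> j \<noteq> i \<and> {k. k < n \<and> \<not> x k} = {i, j}"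
    using k by (auto simp: V_def)
next
  define V where "V = {0..<n}"
  fix i assume "i < n"
  hence iV: "i \<in> V" by (simp add: V_def)
  have pos: "positive V f" using assms(1) by (simp add: V_def)
  have nc: "\<forall>i\<in>V. \<not> const_on (V-{i}) (restr f i False) \<and> \<not> const_on (V-{i}) (restr f i True)"
    using assms(2) unfolding canalyzing_def V_def by blast
  have c1: "canalyzing (V-{i}) (restr f i True)"
    using assms(3) \<open>i < n\<close> by (auto simp: V_def)
  obtain k where k: "k \<in> V-{i}" and nz: "f (\<lambda>j. j=i \<or> j=k)"
    using LB[OF pos iV nc c1] by blast
  have kV: "k \<in> V" using k by simp
  have fi: "\<not> f (\<lambda>j. j=i)" using L2[OF pos iV] nc iV by blast
  have fk: "\<not> f (\<lambda>j. j=k)" using L2[OF pos kV] nc kV by blast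
  have "min_one V f (\<lambda>j. j=i \<or> j=k)"
    unfolding min_one_def
  proof (intro conjI ballI impI)
    show "(\<lambda>j. j=i \<or> j=k) \<in> pts V" using iV kV by (auto simp: pts_def)
    show "f (\<lambda>j. j=i \<or> j=k)" by (rule nz)
    fix y assume y: "y \<in> pts V" and h: "leqB y (\<lambda>j. j=i \<or> j=k) \<and> y \<noteq> (\<lambda>j. j=i \<or> j=k)"
    have "\<not> y i \<or> \<not> y k"
    proof (rule ccontr)
      assume "\<not> (\<not> y i \<or> \<not> y k)"
      with h have "y = (\<lambda>j. j=i \<or> j=k)" by (auto simp: fun_eq_iff leqB_def)
      with h show False by simp
    qed
    then show "\<not> f y"
    proof
      assume "\<not> y i" show "\<not> f y"
      proof
        assume "f y"
        have "f (\<lambda>j. j=k)"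
          by (rule posD[OF pos y _ _ \<open>f y\<close>]) (use h \<open>\<not> y i\<close> kV in \<open>auto simp: pts_def leqB_def\<close>)
        with fk show False by simp
      qed
    next
      assume "\<not> y k" show "\<not> f y"
      proof
        assume "f y"
        have "f (\<lambda>j. j=i)"
          by (rule posD[OF pos y _ _ \<open>f y\<close>]) (use h \<open>\<not> y k\<close> iV in \<open>auto simp: pts_def leqB_def\<close>)
        with fi show False by simp
      qed
    qed
  qed
  moreover have "{j. j < n \<and> (j=i \<or> j=k)} = {i, k}"
    using k iV by (auto simp: V_def)
  ultimately show "\<exists>x j. min_one {0..<n} f x \<and> j < n \<and> j \<noteq> i \<and> {k. k < n \<and> x k} = {i, j}"
    using k by (auto simp: V_def)
qed

end
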